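(* Let $H=\mathrm{sh}_0(G_{\mathtt{ALD}})$ and let $M$ be the set of cosets $gH$, $g\in G_{\mathtt{ALD}}$. Then the operations $(gH)*(hH):=(g*h)H$ and $(gH)\circ(hH):=(g\circ h)H$ are well defined on $M$, and $(M,*,\circ)$ is an $\mathtt{ALD}$-algebra, i.e. it satisfies $a*(b*c)=(a*b)*(a*c)$, $a*(b\circ c)=(a*b)\circ(a*c)$ and $a*(b*c)=(a\circ b)*c$ for all $a,b,c\in M$.
   Context: Addresses are finite sequences over $\{0,1\}$, $\varepsilon$ empty, concatenation by juxtaposition; incomparable means neither is a prefix of the other. $G_{\mathtt{ALD}}$ is the group generated by $S_\alpha,A_\alpha$ ($\alpha\in\{0,1\}^*$) subject to the relations, with $X,Y\in\{S,A\}$ and arbitrary addresses $\alpha,\beta,\delta$ ($\delta$ possibly empty): $X_\alpha Y_\beta=Y_\beta X_\alpha$ for $\alpha,\beta$ incomparable; $X_{\alpha0\delta}S_\alpha=S_\alpha X_{\alpha00\delta}X_{\alpha10\delta}$; $X_{\alpha10\delta}S_\alpha=S_\alpha X_{\alpha01\delta}$; $X_{\alpha11\delta}S_\alpha=S_\alpha X_{\alpha11\delta}$; $X_{\alpha0\delta}A_\alpha=A_\alpha X_{\alpha00\delta}$; $X_{\alpha10\delta}A_\alpha=A_\alpha X_{\alpha01\delta}$; $X_{\alpha11\delta}A_\alpha=A_\alpha X_{\alpha1\delta}$; $S_\alpha S_{\alpha1}S_\alpha=S_{\alpha1}S_\alpha S_{\alpha1}S_{\alpha0}$; $S_\alpha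 S_{\alpha1}A_\alpha=A_{\alpha1}S_\alpha S_{\alpha0}$; $A_\alpha S_\alpha=S_{\alpha1}S_\alpha A_{\alpha1}A_{\alpha0}$. $\mathrm{sh}_\beta$ is the endomorphism with $S_\alpha\mapsto S_{\beta\alpha}$, $A_\alpha\mapsto A_{\beta\alpha}$. On $G_{\mathtt{ALD}}$: $g*h:=g\,\mathrm{sh}_1(h)\,S_\varepsilon\,\mathrm{sh}_1(g)^{-1}$ and $g\circ h:=g\,\mathrm{sh}_1(h)\,A_\varepsilon$. *)

theory Defs
  imports Main
begin

text \<open>Addresses: bool lists, False = 0, True = 1.\<close>
type_synonym addr = "bool list"

datatype gen = S addr | A addr

text \<open>Words in the free group: letters are (sign, generator); True = positive.\<close>
type_synonym word = "(bool \<times> gen) list"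

definition gw :: "gen \<Rightarrow> (bool \<times> gen)" where "gw x = (True, x)"

definition is_prefix :: "addr \<Rightarrow> addr \<Rightarrow> bool" where
  "is_prefix a b \<longleftrightarrow> (\<exists>c. b = a @ c)"

definition incomparable :: "addr \<Rightarrow> addr \<Rightarrow> bool" where
  "incomparable a b \<longleftrightarrow> \<not> is_prefix a b \<and> \<not> is_prefix b a"

inductive ald_rel :: "word \<Rightarrow> word \<Rightarrow> bool" where
  comm: "X \<in> {S, A} \<Longrightarrow> Y \<in> {S, A} \<Longrightarrow> incomparable \<alpha> \<beta> \<Longrightarrow>
     ald_rel [gw (X \<alpha>), gw (Y \<beta>)] [gw (Y \<beta>), gw (X \<alpha>)]"
| r2: "X \<in> {S, A} \<Longrightarrow>
     ald_rel [gw (X (\<alpha> @ [False] @ \<delta>)), gw (S \<alpha>)]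
             [gw (S \<alpha>), gw (X (\<alpha> @ [False, False] @ \<delta>)), gw (X (\<alpha> @ [True, False] @ \<delta>))]"
| r3: "X \<in> {S, A} \<Longrightarrow>
     ald_rel [gw (X (\<alpha> @ [True, False] @ \<delta>)), gw (S \<alpha>)]
             [gw (S \<alpha>), gw (X (\<alpha> @ [False, True] @ \<delta>))]"
| r4: "X \<in> {S, A} \<Longrightarrow>
     ald_rel [gw (X (\<alpha> @ [True, True] @ \<delta>)), gw (S \<alpha>)]
             [gw (S \<alpha>), gw (X (\<alpha> @ [True, True] @ \<delta>))]"
| r5: "X \<in> {S, A} \<Longrightarrow>
     ald_rel [gw (X (\<alpha> @ [False] @ \<delta>)), gw (A \<alpha>)]
             [gw (A \<alpha>), gw (X (\<alpha> @ [False, False] @ \<delta>))]"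
| r6: "X \<in> {S, A} \<Longrightarrow>
     ald_rel [gw (X (\<alpha> @ [True, False] @ \<delta>)), gw (A \<alpha>)]
             [gw (A \<alpha>), gw (X (\<alpha> @ [False, True] @ \<delta>))]"
| r7: "X \<in> {S, A} \<Longrightarrow>
     ald_rel [gw (X (\<alpha> @ [True, True] @ \<delta>)), gw (A \<alpha>)]
             [gw (A \<alpha>), gw (X (\<alpha> @ [True] @ \<delta>))]"
| r8: "ald_rel [gw (S \<alpha>), gw (S (\<alpha> @ [True])), gw (S \<alpha>)]
               [gw (S (\<alpha> @ [True])), gw (S \<alpha>), gw (S (\<alpha> @ [True])), gw (S (\<alpha> @ [False]))]"
| r9: "ald_rel [gw (S \<alpha>), gw (S (\<alpha> @ [True])), gw (A \<alpha>)]
               [gw (A (\<alpha> @ [True])), gw (S \<alpha>), gw (S (\<alpha> @ [False]))]"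
| r10: "ald_rel [gw (A \<alpha>), gw (S \<alpha>)]
                [gw (S (\<alpha> @ [True])), gw (S \<alpha>), gw (A (\<alpha> @ [True])), gw (A (\<alpha> @ [False]))]"

inductive geq :: "word \<Rightarrow> word \<Rightarrow> bool" where
  refl: "geq w w"
| sym: "geq u v \<Longrightarrow> geq v u"
| trans: "geq u v \<Longrightarrow> geq v w \<Longrightarrow> geq u w"
| cancel: "geq (u @ [(b, x), (\<not> b, x)] @ v) (u @ v)"
| rel: "ald_rel l r \<Longrightarrow> geq (u @ l @ v) (u @ r @ v)"

definition winv :: "word \<Rightarrow> word" where
  "winv w = rev (map (\<lambda>(b, x). (\<not> b, x)) w)"

fun sh_gen :: "addr \<Rightarrow> gen \<Rightarrow> gen" where
  "sh_gen \<beta> (S \<alpha>) = S (\<beta> @ \<alpha>)"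
| "sh_gen \<beta> (A \<alpha>) = A (\<beta> @ \<alpha>)"

definition sh :: "addr \<Rightarrow> word \<Rightarrow> word" where
  "sh \<beta> w = map (\<lambda>(b, x). (b, sh_gen \<beta> x)) w"

definition ald_star :: "word \<Rightarrow> word \<Rightarrow> word" where
  "ald_star g h = g @ sh [True] h @ [gw (S [])] @ winv (sh [True] g)"

definition ald_circ :: "word \<Rightarrow> word \<Rightarrow> word" where
  "ald_circ g h = g @ sh [True] h @ [gw (A [])]"

text \<open>Same left coset of H = sh_0(G_ALD): gH = g'H iff g^{-1} g' \<in> H.\<close>
definition coset_eq :: "word \<Rightarrow> word \<Rightarrow> bool" where
  "coset_eq g g' \<longleftrightarrow> (\<exists>w. geq (winv g @ g') (sh [False] w))"

end

theory Submission imports Defs begin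

lemma geq_cong: "geq u v \<Longrightarrow> geq (p @ u @ q) (p @ v @ q)"
proof (induction rule: geq.induct)
  case (refl w) then show ?case by (rule geq.refl)
next
  case (sym u v) then show ?case by (blast intro: geq.sym)
next
  case (trans u v w) then show ?case by (metis geq.trans)
next
  case (cancel u b x v)
  have "geq ((p @ u) @ [(b, x), (\<not> b, x)] @ (v @ q)) ((p @ u) @ (v @ q))" by (rule geq.cancel)
  then show ?case by simp
next
  case (rel l r u v)
  have "geq ((p @ u) @ l @ (v @ q)) ((p @ u) @ r @ (v @ q))" by (rule geq.rel[OF rel.hyps])
  then show ?case by simp
qed

lemma geq_app: "geq u u' \<Longrightarrow> geq v v' \<Longrightarrow> geq (u @ v) (u' @ v')"
proof -
  assume h1: "geq u u'" and h2: "geq v v'"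
  have 1: "geq (u @ v) (u' @ v)" using geq_cong[OF h1, of "[]" v] by simp
  have 2: "geq (u' @ v) (u' @ v')" using geq_cong[OF h2, of "u'" "[]"] by simp
  show ?thesis by (rule geq.trans[OF 1 2])
qed

lemma winv_append[simp]: "winv (u @ v) = winv v @ winv u"
  by (simp add: winv_def)
lemma winv_winv[simp]: "winv (winv w) = w"
  by (simp add: winv_def rev_map case_prod_beta comp_def)
lemma winv_Nil[simp]: "winv [] = []" by (simp add: winv_def)
lemma winv_single: "winv [(b,x)] = [(\<not> b, x)]" by (simp add: winv_def)

lemma geq_rinv: "geq (w @ winv w) []"
proof (induction w)
  case Nil then show ?case by (simp add: geq.refl)
next
  case (Cons l w)
  obtain b x where l: "l = (b,x)" by fastforce
  have A: "geq ((b,x) # w @ winv w @ [(\<not>b,x)]) [(b,x), (\<not>b,x)]"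
    using geq_cong[OF Cons.IH, of "[(b,x)]" "[(\<not>b,x)]"] by simp
  have B: "geq [(b,x), (\<not>b,x)] []"
    using geq.cancel[of "[]" b x "[]"] by simp
  show ?case using geq.trans[OF A B] l by (simp add: winv_def)
qed

lemma geq_linv: "geq (winv w @ w) []"
  using geq_rinv[of "winv w"] by simp

lemma geq_winv: "geq u v \<Longrightarrow> geq (winv u) (winv v)"
proof -
  assume h: "geq u v"
  have a: "geq (winv u @ v @ winv v) (winv u)"
    using geq_app[OF geq.refl[of "winv u"] geq_rinv[of v]] by simp
  have b: "geq (winv u @ u @ winv v) (winv u @ v @ winv v)" using geq_cong[OF h] .
  have c: "geq (winv u @ u @ winv v) (winv v)"
    using geq_app[OF geq_linv[of u] geq.refl[of "winv v"]] by simp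
  show ?thesis by (meson a b c geq.sym geq.trans)
qed

lemma equivp_geq: "equivp geq"
  by (rule equivpI) (auto simp: reflp_def symp_def transp_def intro: geq.refl geq.sym geq.trans)

quotient_type G = word / geq morphisms rep_G abs_G
  by (rule equivp_geq)

instantiation G :: group_add
begin
lift_definition zero_G :: G is "[]" .
lift_definition plus_G :: "G \<Rightarrow> G \<Rightarrow> G" is "(@)" by (rule geq_app)
lift_definition uminus_G :: "G \<Rightarrow> G" is winv by (rule geq_winv)
definition minus_G :: "G \<Rightarrow> G \<Rightarrow> G" where "minus_G a b = a + - b"
instance
proof
  fix a b c :: G
  show "a + b + c = a + (b + c)" by transfer (simp add: geq.refl)
  show "0 + a = a" by transfer (simp add: geq.refl)
  show "a + 0 = a" by transfer (simp add: geq.refl)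
  show "- a + a = 0" by transfer (rule geq_linv)
  show "a + - b = a - b" by (simp add: minus_G_def)
qed
end


fun gad :: "gen \<Rightarrow> addr" where "gad (S a) = a" | "gad (A a) = a"

lemma gen_form: "\<exists>X\<in>{S, A}. x = X (gad x)"
  by (cases x) auto

lemma sh_gen_X: "X \<in> {S, A} \<Longrightarrow> sh_gen b (X a) = X (b @ a)"
  by auto

lemma gad_sh_gen[simp]: "gad (sh_gen b x) = b @ gad x"
  by (cases x) auto

lemma sh_gen_sh_gen[simp]: "sh_gen b (sh_gen c x) = sh_gen (b @ c) x"
  by (cases x) auto

lemma sh_gen_Nil[simp]: "sh_gen [] x = x"
  by (cases x) auto

lemma sh_Nil[simp]: "sh b [] = []" by (simp add: sh_def)
lemma sh_Cons[simp]: "sh b ((c, x) # w) = (c, sh_gen b x) # sh b w" by (simp add: sh_def)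
lemma sh_append[simp]: "sh b (u @ v) = sh b u @ sh b v" by (simp add: sh_def)
lemma sh_winv: "sh b (winv w) = winv (sh b w)"
  by (simp add: sh_def winv_def rev_map case_prod_beta comp_def)
lemma sh_sh: "sh b (sh c w) = sh (b @ c) w"
  by (induction w) (auto simp: sh_def)
lemma sh_empty_addr: "sh [] w = w"
  by (induction w) (auto simp: sh_def)

lemma is_prefix_app: "is_prefix (b @ x) (b @ y) \<longleftrightarrow> is_prefix x y"
  by (simp add: is_prefix_def)

lemma incomparable_app: "incomparable (b @ x) (b @ y) \<longleftrightarrow> incomparable x y"
  by (simp add: incomparable_def is_prefix_app)

lemma ald_rel_sh: "ald_rel l r \<Longrightarrow> ald_rel (sh b l) (sh b r)"
proof (induction rule: ald_rel.induct)
  case (comm X Y \<alpha> \<beta>)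
  then show ?case using ald_rel.comm[of X Y "b @ \<alpha>" "b @ \<beta>"]
    by (simp add: gw_def sh_gen_X incomparable_app)
next
  case (r2 X \<alpha> \<delta>)
  then show ?case using ald_rel.r2[of X "b @ \<alpha>" \<delta>] by (simp add: gw_def sh_gen_X)
next
  case (r3 X \<alpha> \<delta>)
  then show ?case using ald_rel.r3[of X "b @ \<alpha>" \<delta>] by (simp add: gw_def sh_gen_X)
next
  case (r4 X \<alpha> \<delta>)
  then show ?case using ald_rel.r4[of X "b @ \<alpha>" \<delta>] by (simp add: gw_def sh_gen_X)
next
  case (r5 X \<alpha> \<delta>)
  then show ?case using ald_rel.r5[of X "b @ \<alpha>" \<delta>] by (simp add: gw_def sh_gen_X)
next
  case (r6 X \<alpha> \<delta>)
  then show ?case using ald_rel.r6[of X "b @ \<alpha>" \<delta>] by (simp add: gw_def sh_gen_X)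
next
  case (r7 X \<alpha> \<delta>)
  then show ?case using ald_rel.r7[of X "b @ \<alpha>" \<delta>] by (simp add: gw_def sh_gen_X)
next
  case (r8 \<alpha>)
  then show ?case using ald_rel.r8[of "b @ \<alpha>"] by (simp add: gw_def)
next
  case (r9 \<alpha>)
  then show ?case using ald_rel.r9[of "b @ \<alpha>"] by (simp add: gw_def)
next
  case (r10 \<alpha>)
  then show ?case using ald_rel.r10[of "b @ \<alpha>"] by (simp add: gw_def)
qed

lemma geq_sh: "geq u v \<Longrightarrow> geq (sh b u) (sh b v)"
proof (induction rule: geq.induct)
  case (refl w) then show ?case by (rule geq.refl)
next
  case (sym u v) then show ?case by (blast intro: geq.sym)
next
  case (trans u v w) then show ?case by (blast intro: geq.trans)
next
  case (cancel u c x v)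
  have "geq (sh b u @ [(c, sh_gen b x), (\<not> c, sh_gen b x)] @ sh b v) (sh b u @ sh b v)"
    by (rule geq.cancel)
  then show ?case by simp
next
  case (rel l r u v)
  have "geq (sh b u @ sh b l @ sh b v) (sh b u @ sh b r @ sh b v)"
    by (rule geq.rel[OF ald_rel_sh[OF rel.hyps]])
  then show ?case by simp
qed

lift_definition shG :: "addr \<Rightarrow> G \<Rightarrow> G" is sh by (rule geq_sh)

lemma shG_add[simp]: "shG b (x + y) = shG b x + shG b y"
  by transfer (simp add: geq.refl)
lemma shG_minus[simp]: "shG b (- x) = - shG b x"
  by transfer (simp add: geq.refl sh_winv)
lemma shG_zero[simp]: "shG b 0 = 0"
  by transfer (simp add: geq.refl)
lemma shG_shG[simp]: "shG b (shG c x) = shG (b @ c) x"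
  by transfer (simp add: geq.refl sh_sh)
lemma shG_Nil[simp]: "shG [] x = x"
  by transfer (simp add: geq.refl sh_empty_addr)

definition genG :: "gen \<Rightarrow> G" where "genG x = abs_G [gw x]"

lemma abs_Nil[simp]: "abs_G [] = 0"
  by (simp add: zero_G_def)
lemma abs_append: "abs_G (u @ v) = abs_G u + abs_G v"
  by (simp add: plus_G.abs_eq)
lemma abs_winv: "abs_G (winv u) = - abs_G u"
  by (simp add: uminus_G.abs_eq)
lemma abs_sh: "abs_G (sh b u) = shG b (abs_G u)"
  by (simp add: shG.abs_eq)
lemma abs_letter: "abs_G [(c, x)] = (if c then genG x else - genG x)"
proof (cases c)
  case True then show ?thesis by (simp add: genG_def gw_def)
next
  case False
  have "abs_G [(c,x)] = abs_G (winv [gw x])" using False by (simp add: winv_def gw_def)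
  then show ?thesis using False by (simp add: abs_winv genG_def)
qed
lemma abs_Cons: "abs_G (l # w) = abs_G [l] + abs_G w"
  using abs_append[of "[l]" w] by simp
lemma abs_gw_Cons[simp]: "abs_G (gw x # w) = genG x + abs_G w"
  using abs_Cons[of "gw x" w] by (simp add: genG_def)
lemma abs_eq_iff: "abs_G u = abs_G v \<longleftrightarrow> geq u v"
  by (simp add: G.abs_eq_iff)
lemma shG_genG[simp]: "shG b (genG x) = genG (sh_gen b x)"
  by (simp add: genG_def shG.abs_eq gw_def)

lemma rel_G: "ald_rel l r \<Longrightarrow> abs_G l = abs_G r"
  using geq.rel[of l r "[]" "[]"] by (simp add: abs_eq_iff)

definition ghom :: "(G \<Rightarrow> G) \<Rightarrow> bool" where
  "ghom f \<longleftrightarrow> (\<forall>a b. f (a + b) = f a + f b)"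

lemma ghom_zero: "ghom f \<Longrightarrow> f 0 = 0"
proof -
  assume h: "ghom f"
  have "f 0 + f 0 = f 0 + 0" using h unfolding ghom_def by (metis add_0_right)
  then show ?thesis by (rule add_left_imp_eq)
qed

lemma ghom_minus: "ghom f \<Longrightarrow> f (- a) = - f a"
proof -
  assume h: "ghom f"
  have "f (- a) + f a = f (- a + a)" using h unfolding ghom_def by (simp only:)
  also have "\<dots> = 0" using ghom_zero[OF h] by simp
  finally show ?thesis by (simp add: eq_neg_iff_add_eq_0)
qed

lemma ghom_ext:
  assumes f: "ghom f" and g: "ghom g" and gen: "\<And>x. f (genG x) = g (genG x)"
  shows "f y = g y"
proof -
  obtain w where y: "y = abs_G w" by (induct y rule: G.abs_induct) auto
  have "f (abs_G w) = g (abs_G w)"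
  proof (induction w)
    case Nil then show ?case by (simp add: ghom_zero f g)
  next
    case (Cons l w)
    obtain c x where l: "l = (c, x)" by fastforce
    have "f (abs_G [l]) = g (abs_G [l])"
      using gen l by (simp add: abs_letter ghom_minus f g)
    then show ?case using Cons f g abs_Cons[of l w] by (simp add: ghom_def)
  qed
  then show ?thesis using y by simp
qed


declare add_uminus_conv_diff[simp del]

definition cm :: "G \<Rightarrow> G \<Rightarrow> bool" where "cm a b \<longleftrightarrow> a + b = b + a"

lemma cm_sym: "cm a b \<Longrightarrow> cm b a" by (simp add: cm_def)
lemma cm_zero: "cm a 0" by (simp add: cm_def)
lemma cm_neg: "cm a b \<Longrightarrow> cm (- a) b"
proof -
  assume h: "cm a b"
  have "- a + b = - a + (b + a) + - a" by (simp add: add.assoc)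
  also have "\<dots> = - a + (a + b) + - a" using h by (simp add: cm_def)
  also have "\<dots> = b + - a" by (simp add: add.assoc)
  finally show ?thesis by (simp add: cm_def)
qed
lemma cm_add: "cm a b \<Longrightarrow> cm a c \<Longrightarrow> cm a (b + c)"
proof -
  assume h1: "cm a b" and h2: "cm a c"
  have "a + (b + c) = (a + b) + c" by (simp add: add.assoc)
  also have "\<dots> = b + (a + c)" using h1 by (simp add: cm_def add.assoc)
  also have "\<dots> = b + (c + a)" using h2 by (simp add: cm_def)
  finally show ?thesis by (simp add: cm_def add.assoc)
qed

lemma cm_letter:
  assumes "incomparable (gad x) (gad y)" shows "cm (genG x) (genG y)"
proof -
  obtain X where X: "X \<in> {S, A}" "x = X (gad x)" using gen_form by blast
  obtain Y where Y: "Y \<in> {S, A}" "y = Y (gad y)" using gen_form by blast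
  have "abs_G [gw (X (gad x)), gw (Y (gad y))] = abs_G [gw (Y (gad y)), gw (X (gad x))]"
    by (rule rel_G[OF ald_rel.comm[OF X(1) Y(1) assms]])
  then show ?thesis using X Y by (simp add: cm_def)
qed

lemma cm_letter_word:
  "(\<forall>m\<in>set v. incomparable (gad x) (gad (snd m))) \<Longrightarrow> cm (genG x) (abs_G v)"
proof (induction v)
  case Nil then show ?case by (simp add: cm_zero)
next
  case (Cons m v)
  obtain c y where m: "m = (c, y)" by fastforce
  have "cm (genG x) (genG y)" using Cons.prems m by (simp add: cm_letter)
  then have "cm (genG x) (abs_G [m])" using m
    by (simp add: abs_letter) (metis cm_sym cm_neg)
  then show ?case using Cons abs_Cons[of m v] by (simp add: cm_add)
qed

lemma cm_words:
  "(\<forall>l\<in>set u. \<forall>m\<in>set v. incomparable (gad (snd l)) (gad (snd m))) \<Longrightarrow> cm (abs_G u) (abs_G v)"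
proof (induction u)
  case Nil then show ?case by (simp add: cm_zero cm_sym)
next
  case (Cons l u)
  obtain c y where l: "l = (c, y)" by fastforce
  have "cm (genG y) (abs_G v)" using Cons.prems l by (simp add: cm_letter_word)
  then have "cm (abs_G v) (abs_G [l])" using l
    by (simp add: abs_letter) (metis cm_sym cm_neg)
  then show ?case using Cons abs_Cons[of l u] by (simp add: cm_add cm_sym)
qed

lemma incomp_FT: "incomparable (False # a) (True # b)"
  by (simp add: incomparable_def is_prefix_def)

lemma cm01: "cm (shG [False] x) (shG [True] y)"
proof -
  obtain u where u: "x = abs_G u" by (induct x rule: G.abs_induct) auto
  obtain v where v: "y = abs_G v" by (induct y rule: G.abs_induct) auto
  have "cm (abs_G (sh [False] u)) (abs_G (sh [True] v))"
    by (rule cm_words) (auto simp: sh_def incomp_FT)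
  then show ?thesis using u v by (simp add: abs_sh)
qed

lemma cm_sh: "cm a b \<Longrightarrow> cm (shG p a) (shG p b)"
  unfolding cm_def by (metis shG_add)

lemma cm_inc: "cm (shG (p @ False # q) x) (shG (p @ True # r) y)"
  using cm_sh[OF cm01[of "shG q x" "shG r y"], of p] by simp

lemma ghom_sh: "ghom (shG p)" by (simp add: ghom_def)
lemma ghom_conj: "ghom f \<Longrightarrow> ghom (\<lambda>x. - c + f x + c)"
  by (simp add: ghom_def add.assoc)
lemma ghom_add:
  assumes f: "ghom f" and g: "ghom g" and c: "\<And>a b. cm (g a) (f b)"
  shows "ghom (\<lambda>x. f x + g x)"
  unfolding ghom_def
proof (intro allI)
  fix a b
  have "f (a + b) + g (a + b) = f a + (f b + g a) + g b"
    using f g by (simp add: ghom_def add.assoc)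
  also have "\<dots> = f a + (g a + f b) + g b" using c[of a b] by (simp add: cm_def)
  finally show "f (a + b) + g (a + b) = f a + g a + (f b + g b)" by (simp add: add.assoc)
qed

lemma conj_of: "(a::G) + c = c + b \<Longrightarrow> - c + a + c = b"
proof -
  assume h: "a + c = c + b"
  have "- c + a + c = - c + (a + c)" by (simp add: add.assoc)
  also have "\<dots> = b" using h by simp
  finally show ?thesis .
qed

abbreviation "sE \<equiv> genG (S [])"
abbreviation "aE \<equiv> genG (A [])"

lemma gen_form2: "\<exists>X\<in>{S, A}. \<exists>a. x = X a"
  by (cases x) auto

lemma K1: "- sE + shG [False] x + sE = shG [False, False] x + shG [True, False] x"
proof (rule ghom_ext[where f = "\<lambda>x. - sE + shG [False] x + sE" and g = "\<lambda>x. shG [False, False] x + shG [True, False] x"])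
  show "ghom (\<lambda>x. - sE + shG [False] x + sE)" by (rule ghom_conj[OF ghom_sh])
  show "ghom (\<lambda>x. shG [False, False] x + shG [True, False] x)"
    by (rule ghom_add[OF ghom_sh ghom_sh]) (metis cm_inc cm_sym append_Nil)
  fix y
  obtain X d where X: "X \<in> {S, A}" "y = X d" using gen_form2 by blast
  have "abs_G [gw (X ([] @ [False] @ d)), gw (S [])] = abs_G [gw (S []), gw (X ([] @ [False, False] @ d)), gw (X ([] @ [True, False] @ d))]"
    by (rule rel_G[OF ald_rel.r2[OF X(1)]])
  then show "- sE + shG [False] (genG y) + sE = shG [False, False] (genG y) + shG [True, False] (genG y)"
    using X by (simp add: sh_gen_X conj_of add.assoc)
qed

lemma K2: "- sE + shG [True, False] x + sE = shG [False, True] x"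
proof (rule ghom_ext[where f = "\<lambda>x. - sE + shG [True, False] x + sE" and g = "shG [False, True]"])
  show "ghom (\<lambda>x. - sE + shG [True, False] x + sE)" by (rule ghom_conj[OF ghom_sh])
  show "ghom (shG [False, True])" by (rule ghom_sh)
  fix y
  obtain X d where X: "X \<in> {S, A}" "y = X d" using gen_form2 by blast
  have "abs_G [gw (X ([] @ [True, False] @ d)), gw (S [])] = abs_G [gw (S []), gw (X ([] @ [False, True] @ d))]"
    by (rule rel_G[OF ald_rel.r3[OF X(1)]])
  then show "(\<lambda>x. - sE + shG [True, False] x + sE) (genG y) = (shG [False, True]) (genG y)"
    using X by (simp add: sh_gen_X conj_of add.assoc)
qed

lemma K3: "- sE + shG [True, True] x + sE = shG [True, True] x"
proof (rule ghom_ext[where f = "\<lambda>x. - sE + shG [True, True] x + sE" and g = "shG [True, True]"])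
  show "ghom (\<lambda>x. - sE + shG [True, True] x + sE)" by (rule ghom_conj[OF ghom_sh])
  show "ghom (shG [True, True])" by (rule ghom_sh)
  fix y
  obtain X d where X: "X \<in> {S, A}" "y = X d" using gen_form2 by blast
  have "abs_G [gw (X ([] @ [True, True] @ d)), gw (S [])] = abs_G [gw (S []), gw (X ([] @ [True, True] @ d))]"
    by (rule rel_G[OF ald_rel.r4[OF X(1)]])
  then show "(\<lambda>x. - sE + shG [True, True] x + sE) (genG y) = (shG [True, True]) (genG y)"
    using X by (simp add: sh_gen_X conj_of add.assoc)
qed

lemma K4: "- aE + shG [False] x + aE = shG [False, False] x"
proof (rule ghom_ext[where f = "\<lambda>x. - aE + shG [False] x + aE" and g = "shG [False, False]"])
  show "ghom (\<lambda>x. - aE + shG [False] x + aE)" by (rule ghom_conj[OF ghom_sh])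
  show "ghom (shG [False, False])" by (rule ghom_sh)
  fix y
  obtain X d where X: "X \<in> {S, A}" "y = X d" using gen_form2 by blast
  have "abs_G [gw (X ([] @ [False] @ d)), gw (A [])] = abs_G [gw (A []), gw (X ([] @ [False, False] @ d))]"
    by (rule rel_G[OF ald_rel.r5[OF X(1)]])
  then show "(\<lambda>x. - aE + shG [False] x + aE) (genG y) = (shG [False, False]) (genG y)"
    using X by (simp add: sh_gen_X conj_of add.assoc)
qed

lemma K5: "- aE + shG [True, False] x + aE = shG [False, True] x"
proof (rule ghom_ext[where f = "\<lambda>x. - aE + shG [True, False] x + aE" and g = "shG [False, True]"])
  show "ghom (\<lambda>x. - aE + shG [True, False] x + aE)" by (rule ghom_conj[OF ghom_sh])
  show "ghom (shG [False, True])" by (rule ghom_sh)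
  fix y
  obtain X d where X: "X \<in> {S, A}" "y = X d" using gen_form2 by blast
  have "abs_G [gw (X ([] @ [True, False] @ d)), gw (A [])] = abs_G [gw (A []), gw (X ([] @ [False, True] @ d))]"
    by (rule rel_G[OF ald_rel.r6[OF X(1)]])
  then show "(\<lambda>x. - aE + shG [True, False] x + aE) (genG y) = (shG [False, True]) (genG y)"
    using X by (simp add: sh_gen_X conj_of add.assoc)
qed

lemma K6: "- aE + shG [True, True] x + aE = shG [True] x"
proof (rule ghom_ext[where f = "\<lambda>x. - aE + shG [True, True] x + aE" and g = "shG [True]"])
  show "ghom (\<lambda>x. - aE + shG [True, True] x + aE)" by (rule ghom_conj[OF ghom_sh])
  show "ghom (shG [True])" by (rule ghom_sh)
  fix y
  obtain X d where X: "X \<in> {S, A}" "y = X d" using gen_form2 by blast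
  have "abs_G [gw (X ([] @ [True, True] @ d)), gw (A [])] = abs_G [gw (A []), gw (X ([] @ [True] @ d))]"
    by (rule rel_G[OF ald_rel.r7[OF X(1)]])
  then show "(\<lambda>x. - aE + shG [True, True] x + aE) (genG y) = (shG [True]) (genG y)"
    using X by (simp add: sh_gen_X conj_of add.assoc)
qed

lemma R8: "sE + (genG (S [True]) + sE) = genG (S [True]) + (sE + (genG (S [True]) + genG (S [False])))"
  using rel_G[OF ald_rel.r8[of "[]"]] by simp
lemma R9: "sE + (genG (S [True]) + aE) = genG (A [True]) + (sE + genG (S [False]))"
  using rel_G[OF ald_rel.r9[of "[]"]] by simp
lemma R10: "aE + sE = genG (S [True]) + (sE + (genG (A [True]) + genG (A [False])))"
  using rel_G[OF ald_rel.r10[of "[]"]] by simp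


definition starG :: "G \<Rightarrow> G \<Rightarrow> G" where
  "starG x y = x + shG [True] y + sE + - shG [True] x"
definition circG :: "G \<Rightarrow> G \<Rightarrow> G" where
  "circG x y = x + shG [True] y + aE"

lemma ct: "- c + a + c = d \<Longrightarrow> (a::G) + (c + r) = c + (d + r)"
proof -
  assume h: "- c + a + c = d"
  have "a + c = c + d" using h[symmetric] by (simp add: add.assoc)
  then show ?thesis by (metis add.assoc)
qed
lemma ct0: "- c + a + c = d \<Longrightarrow> (a::G) + c = c + d"
  using ct[of c a d 0] by simp
lemma ct_neg: "- c + a + c = d \<Longrightarrow> - (a::G) + (c + r) = c + (- d + r)"
proof -
  assume h: "- c + a + c = d"
  have "- d = - c + - a + c" using h[symmetric] by (simp add: add.assoc minus_add)
  then show ?thesis by (simp add: add.assoc)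
qed
lemma ct_neg0: "- c + a + c = d \<Longrightarrow> - (a::G) + c = c + - d"
  using ct_neg[of c a d 0] by simp
lemma cmt: "cm a b \<Longrightarrow> a + (b + r) = b + (a + r)"
  unfolding cm_def by (metis add.assoc)

lemma cmS3: "cm sE (shG [True, True] x)"
  using ct0[OF K3[of x]] by (simp add: cm_def)

lemma cm0S: "cm (genG (S (False # q))) (shG (True # r) y)"
  using cm_inc[of "[]" q sE r y] by simp
lemma cm0A: "cm (genG (A (False # q))) (shG (True # r) y)"
  using cm_inc[of "[]" q aE r y] by simp

lemma W1: "starG (x + shG [False] a) (y + shG [False] b) = starG x y + shG [False] (shG [False] a + shG [True] b)"
proof -
  have "starG (x + shG [False] a) (y + shG [False] b) = x + (shG [False] a + (shG [True] y + (shG [True, False] b + (sE + (- shG [True, False] a + - shG [True] x)))))"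
    by (simp add: starG_def add.assoc minus_add)
  also have "\<dots> = x + (shG [True] y + (shG [False] a + (shG [True, False] b + (sE + (- shG [True, False] a + - shG [True] x)))))"
    using cmt[OF cm_inc[of "[]" "[]" a "[]" y]] by simp
  also have "\<dots> = x + (shG [True] y + (shG [False] a + (sE + (shG [False, True] b + (- shG [True, False] a + - shG [True] x)))))"
    using ct[OF K2[of b]] by simp
  also have "\<dots> = x + (shG [True] y + (sE + (shG [False, False] a + (shG [True, False] a + (shG [False, True] b + (- shG [True, False] a + - shG [True] x))))))"
    using ct[OF K1[of a]] by (simp add: add.assoc)
  also have "\<dots> = x + (shG [True] y + (sE + (shG [False, False] a + (shG [False, True] b + - shG [True] x))))"
    using cmt[OF cm_sym[OF cm_inc[of "[]" "[True]" b "[False]" a]]] by simp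
  also have "\<dots> = x + (shG [True] y + (sE + (- shG [True] x + (shG [False, False] a + shG [False, True] b))))"
  proof -
    have "cm (- shG [True] x) (shG [False, False] a + shG [False, True] b)"
      by (intro cm_neg cm_add cm_sym[OF cm_inc[of "[]" "[False]" a "[]" x, simplified]]
            cm_sym[OF cm_inc[of "[]" "[True]" b "[]" x, simplified]])
    then show ?thesis by (simp add: cm_def add.assoc)
  qed
  also have "\<dots> = starG x y + shG [False] (shG [False] a + shG [True] b)"
    by (simp add: starG_def add.assoc)
  finally show ?thesis .
qed


lemma W2: "circG (x + shG [False] a) (y + shG [False] b) = circG x y + shG [False] (shG [False] a + shG [True] b)"
proof -
  have "circG (x + shG [False] a) (y + shG [False] b) = x + (shG [False] a + (shG [True] y + (shG [True, False] b + aE)))"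
    by (simp add: circG_def add.assoc)
  also have "\<dots> = x + (shG [True] y + (shG [False] a + (shG [True, False] b + aE)))"
    using cmt[OF cm_inc[of "[]" "[]" a "[]" y]] by simp
  also have "\<dots> = x + (shG [True] y + (shG [False] a + (aE + shG [False, True] b)))"
    using ct0[OF K5[of b]] by simp
  also have "\<dots> = x + (shG [True] y + (aE + (shG [False, False] a + shG [False, True] b)))"
    using ct[OF K4[of a]] by simp
  also have "\<dots> = circG x y + shG [False] (shG [False] a + shG [True] b)"
    by (simp add: circG_def add.assoc)
  finally show ?thesis .
qed

lemma A1: "starG (starG a b) (starG a c) = starG a (starG b c) + shG [False] sE"
proof -
  have "starG (starG a b) (starG a c) = a + (shG [True] b + (sE + (shG [True, True] c + (genG (S [True]) + (- shG [True, True] a + (sE + (shG [True, True] a + (- genG (S [True]) + (- shG [True, True] b + - shG [True] a)))))))))"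
    by (simp add: starG_def add.assoc minus_add)
  also have "\<dots> = a + (shG [True] b + (shG [True, True] c + (sE + (genG (S [True]) + (- shG [True, True] a + (sE + (shG [True, True] a + (- genG (S [True]) + (- shG [True, True] b + - shG [True] a)))))))))"
    using cmt[OF cmS3[of c]] by simp
  also have "\<dots> = a + (shG [True] b + (shG [True, True] c + (sE + (genG (S [True]) + (sE + (- genG (S [True]) + (- shG [True, True] b + - shG [True] a)))))))"
    using cmt[OF cmS3[of a]] by simp
  also have "\<dots> = a + (shG [True] b + (shG [True, True] c + (genG (S [True]) + (sE + (genG (S [True]) + (genG (S [False]) + (- genG (S [True]) + (- shG [True, True] b + - shG [True] a))))))))"
    using R8 by (simp add: add.assoc[symmetric])
  also have "\<dots> = a + (shG [True] b + (shG [True, True] c + (genG (S [True]) + (sE + (genG (S [False]) + (- shG [True, True] b + - shG [True] a))))))"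
  proof -
    have h: "cm (genG (S [False])) (- genG (S [True]))"
      using cm_neg[OF cm_sym[OF cm0S[of "[]" "[]" sE]]] by (simp add: cm_sym)
    show ?thesis using cmt[OF h] by simp
  qed
  also have "\<dots> = a + (shG [True] b + (shG [True, True] c + (genG (S [True]) + (- shG [True, True] b + (sE + (- shG [True] a + genG (S [False])))))))"
  proof -
    have 1: "cm (genG (S [False])) (- shG [True, True] b)"
      using cm_sym[OF cm_neg[OF cm_sym[OF cm0S[of "[]" "[True]" b]]]] by simp
    have 2: "cm (genG (S [False])) (- shG [True] a)"
      using cm_sym[OF cm_neg[OF cm_sym[OF cm0S[of "[]" "[]" a]]]] by simp
    have 3: "cm sE (- shG [True, True] b)"
      using cm_sym[OF cm_neg[OF cm_sym[OF cmS3[of b]]]] .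
    show ?thesis using cmt[OF 1] cmt[OF 3] 2 by (simp add: cm_def)
  qed
  also have "\<dots> = starG a (starG b c) + shG [False] sE"
    by (simp add: starG_def add.assoc minus_add)
  finally show ?thesis .
qed


lemma A2: "circG (starG a b) (starG a c) = starG a (circG b c) + shG [False] sE"
proof -
  have "circG (starG a b) (starG a c) = a + (shG [True] b + (sE + (shG [True, True] c + (genG (S [True]) + (- shG [True, True] a + aE)))))"
    by (simp add: starG_def circG_def add.assoc minus_add)
  also have "\<dots> = a + (shG [True] b + (shG [True, True] c + (sE + (genG (S [True]) + (- shG [True, True] a + aE)))))"
    using cmt[OF cmS3[of c]] by simp
  also have "\<dots> = a + (shG [True] b + (shG [True, True] c + (sE + (genG (S [True]) + (aE + - shG [True] a)))))"
    using ct_neg0[OF K6[of a]] by simp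
  also have "\<dots> = a + (shG [True] b + (shG [True, True] c + (genG (A [True]) + (sE + (genG (S [False]) + - shG [True] a)))))"
    using R9 by (simp add: add.assoc[symmetric])
  also have "\<dots> = a + (shG [True] b + (shG [True, True] c + (genG (A [True]) + (sE + (- shG [True] a + genG (S [False]))))))"
  proof -
    have 2: "cm (genG (S [False])) (- shG [True] a)"
      using cm_sym[OF cm_neg[OF cm_sym[OF cm0S[of "[]" "[]" a]]]] by simp
    show ?thesis using 2 by (simp add: cm_def)
  qed
  also have "\<dots> = starG a (circG b c) + shG [False] sE"
    by (simp add: starG_def circG_def add.assoc minus_add)
  finally show ?thesis .
qed

lemma A3: "starG (circG a b) c = starG a (starG b c) + shG [False] aE"
proof -
  have "starG (circG a b) c = a + (shG [True] b + (aE + (shG [True] c + (sE + (- genG (A [True]) + (- shG [True, True] b + - shG [True] a))))))"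
    by (simp add: starG_def circG_def add.assoc minus_add)
  also have "\<dots> = a + (shG [True] b + (shG [True, True] c + (aE + (sE + (- genG (A [True]) + (- shG [True, True] b + - shG [True] a))))))"
    using ct[OF K6[of c], symmetric] by simp
  also have "\<dots> = a + (shG [True] b + (shG [True, True] c + (genG (S [True]) + (sE + (genG (A [True]) + (genG (A [False]) + (- genG (A [True]) + (- shG [True, True] b + - shG [True] a))))))))"
    using R10 by (simp add: add.assoc[symmetric])
  also have "\<dots> = a + (shG [True] b + (shG [True, True] c + (genG (S [True]) + (sE + (genG (A [False]) + (- shG [True, True] b + - shG [True] a))))))"
  proof -
    have h: "cm (genG (A [False])) (- genG (A [True]))"
      using cm_neg[OF cm_sym[OF cm0A[of "[]" "[]" aE]]] by (simp add: cm_sym)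
    show ?thesis using cmt[OF h] by simp
  qed
  also have "\<dots> = a + (shG [True] b + (shG [True, True] c + (genG (S [True]) + (- shG [True, True] b + (sE + (- shG [True] a + genG (A [False])))))))"
  proof -
    have 1: "cm (genG (A [False])) (- shG [True, True] b)"
      using cm_sym[OF cm_neg[OF cm_sym[OF cm0A[of "[]" "[True]" b]]]] by simp
    have 2: "cm (genG (A [False])) (- shG [True] a)"
      using cm_sym[OF cm_neg[OF cm_sym[OF cm0A[of "[]" "[]" a]]]] by simp
    have 3: "cm sE (- shG [True, True] b)"
      using cm_sym[OF cm_neg[OF cm_sym[OF cmS3[of b]]]] .
    show ?thesis using cmt[OF 1] cmt[OF 3] 2 by (simp add: cm_def)
  qed
  also have "\<dots> = starG a (starG b c) + shG [False] aE"
    by (simp add: starG_def add.assoc minus_add)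
  finally show ?thesis .
qed


lemma coset_eq_G: "coset_eq g g' \<longleftrightarrow> (\<exists>z. abs_G g' = abs_G g + shG [False] z)"
proof
  assume "coset_eq g g'"
  then obtain w where "geq (winv g @ g') (sh [False] w)" by (auto simp: coset_eq_def)
  then have "- abs_G g + abs_G g' = shG [False] (abs_G w)"
    by (simp add: abs_eq_iff[symmetric] abs_append abs_winv abs_sh)
  then have "abs_G g' = abs_G g + shG [False] (abs_G w)"
    by (metis add_minus_cancel)
  then show "\<exists>z. abs_G g' = abs_G g + shG [False] z" by blast
next
  assume "\<exists>z. abs_G g' = abs_G g + shG [False] z"
  then obtain z where z: "abs_G g' = abs_G g + shG [False] z" by blast
  obtain w where w: "z = abs_G w" by (induct z rule: G.abs_induct) auto
  have "abs_G (winv g @ g') = abs_G (sh [False] w)"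
    using z w by (simp add: abs_append abs_winv abs_sh add.assoc[symmetric])
  then show "coset_eq g g'" by (auto simp: coset_eq_def abs_eq_iff)
qed


lemma abs_star: "abs_G (ald_star g h) = starG (abs_G g) (abs_G h)"
  by (simp add: ald_star_def starG_def abs_append abs_winv abs_sh add.assoc)
lemma abs_circ: "abs_G (ald_circ g h) = circG (abs_G g) (abs_G h)"
  by (simp add: ald_circ_def circG_def abs_append abs_sh add.assoc)

lemma P1: "coset_eq g g' \<Longrightarrow> coset_eq h h' \<Longrightarrow> coset_eq (ald_star g h) (ald_star g' h')"
proof -
  assume H1: "coset_eq g g'" and H2: "coset_eq h h'"
  obtain z0 where z0: "abs_G g' = abs_G g + shG [False] z0"
    using H1 coset_eq_G[of g g'] by blast
  obtain z1 where z1: "abs_G h' = abs_G h + shG [False] z1"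
    using H2 coset_eq_G[of h h'] by blast
  have "abs_G (ald_star g' h') = abs_G (ald_star g h) + shG [False] (shG [False] z0 + shG [True] z1)"
    by (simp only: abs_star z0 z1 W1)
  then show ?thesis using coset_eq_G by blast
qed

lemma P2: "coset_eq g g' \<Longrightarrow> coset_eq h h' \<Longrightarrow> coset_eq (ald_circ g h) (ald_circ g' h')"
proof -
  assume H1: "coset_eq g g'" and H2: "coset_eq h h'"
  obtain z0 where z0: "abs_G g' = abs_G g + shG [False] z0"
    using H1 coset_eq_G[of g g'] by blast
  obtain z1 where z1: "abs_G h' = abs_G h + shG [False] z1"
    using H2 coset_eq_G[of h h'] by blast
  have "abs_G (ald_circ g' h') = abs_G (ald_circ g h) + shG [False] (shG [False] z0 + shG [True] z1)"
    by (simp only: abs_circ z0 z1 W2)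
  then show ?thesis using coset_eq_G by blast
qed

lemma P3: "coset_eq (ald_star a (ald_star b c)) (ald_star (ald_star a b) (ald_star a c))"
proof -
  have "abs_G (ald_star (ald_star a b) (ald_star a c)) = abs_G (ald_star a (ald_star b c)) + shG [False] sE"
    by (simp only: abs_star A1)
  then show ?thesis using coset_eq_G by blast
qed

lemma P4: "coset_eq (ald_star a (ald_circ b c)) (ald_circ (ald_star a b) (ald_star a c))"
proof -
  have "abs_G (ald_circ (ald_star a b) (ald_star a c)) = abs_G (ald_star a (ald_circ b c)) + shG [False] sE"
    by (simp only: abs_star abs_circ A2)
  then show ?thesis using coset_eq_G by blast
qed

lemma P5: "coset_eq (ald_star a (ald_star b c)) (ald_star (ald_circ a b) c)"
proof -
  have "abs_G (ald_star (ald_circ a b) c) = abs_G (ald_star a (ald_star b c)) + shG [False] aE"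
    by (simp only: abs_star abs_circ A3)
  then show ?thesis using coset_eq_G by blast
qed

theorem proposition4p4:
  shows "(\<forall>g g' h h'. coset_eq g g' \<and> coset_eq h h' \<longrightarrow>
            coset_eq (ald_star g h) (ald_star g' h') \<and>
            coset_eq (ald_circ g h) (ald_circ g' h')) \<and>
         (\<forall>a b c.
            coset_eq (ald_star a (ald_star b c)) (ald_star (ald_star a b) (ald_star a c)) \<and>
            coset_eq (ald_star a (ald_circ b c)) (ald_circ (ald_star a b) (ald_star a c)) \<and>
            coset_eq (ald_star a (ald_star b c)) (ald_star (ald_circ a b) c))"
  using P1 P2 P3 P4 P5 by blast

end
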